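(* Let $v$ satisfy the standing assumptions and the doubling condition with constant $D$, and $g(x)=v(1-x^{-1})$. For an integer $n\ge1$ let $c_n=\int_{1/2}^1\frac{r^n\,dv(r)}{v(r)^2}$ (Riemann–Stieltjes integral). Then there exist constants $C$ and $n_0$, depending only on $D$, such that $c_n\le \dfrac{C}{g(n)}$ for all $n\ge n_0$.
   Context: Standing assumptions: $v:[0,1)\to[1,\infty)$ is positive, increasing, continuous, $v(0)=1$, $\lim_{r\to1}v(r)=+\infty$. Doubling condition: $v(1-d)\le D\,v(1-2d)$ for all $d\in(0,1/2]$, with $D\ge1$. *)

theory Defs
  imports "HOL-Analysis.Analysis"
begin

text \<open>Stieltjes integral of f with respect to an increasing continuous integrator F
  over a compact interval [a,b], realised as the Lebesgue--Stieltjes integral with respect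
  to the measure dF (F clamped to [a,b] so that it is monotone on all of the reals).
  For continuous f and continuous increasing F this agrees with the Riemann--Stieltjes integral.\<close>
definition stieltjes_int :: "(real \<Rightarrow> real) \<Rightarrow> (real \<Rightarrow> real) \<Rightarrow> real \<Rightarrow> real \<Rightarrow> real" where
  "stieltjes_int f F a b =
     (LINT x:{a..b}|interval_measure (\<lambda>x. F (max a (min x b))). f x)"

definition stieltjes_int_to1 :: "(real \<Rightarrow> real) \<Rightarrow> (real \<Rightarrow> real) \<Rightarrow> real \<Rightarrow> real" where
  "stieltjes_int_to1 f F a = Lim (at_left 1) (\<lambda>R. stieltjes_int f F a R)"

end

theory Submission
  imports Defs
begin

locale vset =
  fixes v :: "real \<Rightarrow> real"
  assumes ge1: "\<And>r. 0 \<le> r \<Longrightarrow> r < 1 \<Longrightarrow> v r \<ge> 1"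
    and vmono: "mono_on {0..<1} v"
    and vcont: "continuous_on {0..<1} v"
begin

lemma UN_Ioc_eq_UNIV_x: "(\<Union>n. { -real n <.. real n}) = UNIV"
  by auto (metis le_less_trans minus_minus neg_less_iff_less not_le real_arch_simple
            of_nat_0_le_iff reals_Archimedean2)

definition F :: "real \<Rightarrow> real \<Rightarrow> real" where "F R x = v (max (1/2) (min x R))"
definition mu :: "real \<Rightarrow> real measure" where "mu R = interval_measure (F R)"

lemma vle: "0 \<le> x \<Longrightarrow> x \<le> y \<Longrightarrow> y < 1 \<Longrightarrow> v x \<le> v y"
  by (rule mono_onD[OF vmono]) auto

lemma F_mono: "1/2 \<le> R \<Longrightarrow> R < 1 \<Longrightarrow> x \<le> y \<Longrightarrow> F R x \<le> F R y"
  unfolding F_def by (intro vle) auto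

lemma F_cont: assumes "1/2 \<le> R" "R < 1" shows "continuous_on UNIV (F R)"
proof -
  have "continuous_on UNIV (\<lambda>x::real. max (1/2) (min x R))"
    by (intro continuous_intros)
  moreover have "(\<lambda>x::real. max (1/2) (min x R)) ` UNIV \<subseteq> {0..<1}" using assms by auto
  ultimately show ?thesis unfolding F_def
    by (rule continuous_on_compose2[OF vcont])
qed

lemma F_rcont: assumes "1/2 \<le> R" "R < 1" shows "continuous (at_right a) (F R)"
proof -
  have "isCont (F R) a" using F_cont[OF assms] by (simp add: continuous_on_eq_continuous_at)
  then show ?thesis by (rule continuous_at_imp_continuous_within)
qed

lemma F_mono': "1/2 \<le> R \<Longrightarrow> R < 1 \<Longrightarrow> (\<And>x y. x \<le> y \<Longrightarrow> F R x \<le> F R y)"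
  by (rule F_mono)

lemma mu_Ioc: assumes "1/2 \<le> R" "R < 1" "a \<le> b" shows "emeasure (mu R) {a<..b} = F R b - F R a"
  unfolding mu_def by (rule emeasure_interval_measure_Ioc[OF assms(3) F_mono'[OF assms(1,2)] F_rcont[OF assms(1,2)]])

lemma mu_Ioc_eq: "1/2 \<le> R \<Longrightarrow> R < 1 \<Longrightarrow> emeasure (mu R) {a<..b} = (if a \<le> b then F R b - F R a else 0)"
  using mu_Ioc[of R a b] by simp

lemma mu_sing: assumes "1/2 \<le> R" "R < 1" shows "emeasure (mu R) {a} = 0"
  using emeasure_interval_measure_Icc[OF order_refl F_mono'[OF assms] F_cont[OF assms], of a] unfolding mu_def by simp

lemma sets_mu[simp, measurable_cong]: "sets (mu R) = sets borel" unfolding mu_def by simp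
lemma space_mu[simp]: "space (mu R) = UNIV" unfolding mu_def by simp

lemma mu_restrict:
  assumes R: "1/2 \<le> R" "R \<le> R'" "R' < 1"
  shows "mu R = density (mu R') (indicator {1/2<..R})"
proof (rule measure_eqI_generator_eq[where \<Omega>=UNIV and E="range (\<lambda>(a,b). {a<..b::real})" and A="\<lambda>i. {-real i<..real i}"])
  fix X assume "X \<in> range (\<lambda>(a,b). {a<..b::real})"
  then obtain a b where X: "X = {a<..b}" by auto
  have R'': "1/2 \<le> R'" "R' < 1" using R by auto
  have "emeasure (density (mu R') (indicator {1/2<..R})) X = (\<integral>\<^sup>+x. indicator {1/2<..R} x * indicator X x \<partial>mu R')"
    by (rule emeasure_density) (auto simp: X)
  also have "\<dots> = (\<integral>\<^sup>+x. indicator (X \<inter> {1/2<..R}) x \<partial>mu R')"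
    by (intro nn_integral_cong) (auto split: split_indicator)
  also have "\<dots> = emeasure (mu R') (X \<inter> {1/2<..R})"
    by (rule nn_integral_indicator) (auto simp: X)
  also have "X \<inter> {1/2<..R} = {max a (1/2)<..min b R}" by (auto simp: X)
  also have "emeasure (mu R') {max a (1/2)<..min b R} = emeasure (mu R) X"
  proof -
    have "(if max a (1/2) \<le> min b R then F R' (min b R) - F R' (max a (1/2)) else 0)
        = (if a \<le> b then F R b - F R a else 0)"
    proof (cases "a \<le> b")
      case False then show ?thesis by auto
    next
      case ab: True
      show ?thesis
      proof (cases "R < a")
        case True
        then have "min b R = R" "min a R = R" using ab by auto
        then show ?thesis using True ab by (auto simp: F_def)
      next
        case aR: False
        show ?thesis
        proof (cases "b < 1/2")
          case True
          then have "max (1/2) (min b R) = 1/2" "max (1/2) (min a R) = 1/2" using ab by auto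
          then show ?thesis using True ab by (auto simp: F_def)
        next
          case False
          then have 1: "max (1/2) (min (min b R) R') = min b R" "max (1/2) (min b R) = min b R"
             "max (1/2) (min (max a (1/2)) R') = max a (1/2)" "max (1/2) (min a R) = max a (1/2)" "max (1/2) a = max a (1/2)"
            using ab aR R by auto
          have "max a (1/2) \<le> min b R" using ab aR R False by auto
          then show ?thesis using ab by (simp only: F_def 1 if_True)
        qed
      qed
    qed
    then show ?thesis unfolding X using mu_Ioc_eq[OF R(1) order.strict_trans1[OF R(2,3)]] mu_Ioc_eq[OF R'']
      by simp
  qed
  finally show "emeasure (mu R) X = emeasure (density (mu R') (indicator {1/2<..R})) X" by simp
next
  show "sets (mu R) = sigma_sets UNIV (range (\<lambda>(a,b). {a<..b::real}))"
    by (simp add: borel_sigma_sets_Ioc)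
  show "sets (density (mu R') (indicator {1/2<..R})) = sigma_sets UNIV (range (\<lambda>(a,b). {a<..b::real}))"
    by (simp add: borel_sigma_sets_Ioc)
  show "emeasure (mu R) {- real i<..real i} \<noteq> \<infinity>" for i
    using R by (simp add: mu_Ioc)
qed (auto simp: Int_stable_def UN_Ioc_eq_UNIV_x)

end

definition pp :: "nat \<Rightarrow> real" where "pp j = 1 - 1/2^(j+1)"

lemma pp_ge: "1/2 \<le> pp j"
proof -
  have "(1::real)/2^(j+1) \<le> 1/2^1" by (intro divide_left_mono power_increasing) auto
  then show ?thesis by (simp add: pp_def)
qed

lemma pp_lt: "pp j < 1" by (simp add: pp_def)
lemma pp_0: "pp 0 = 1/2" by (simp add: pp_def)
lemma pp_Suc: "pp (Suc j) = 1 - (1/2^(j+2))" by (simp add: pp_def)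

lemma find_interval: "(p'::nat\<Rightarrow>real) 0 < x \<Longrightarrow> x \<le> p' J \<Longrightarrow> \<exists>j<J. p' j < x \<and> x \<le> p' (Suc j)"
proof (induction J)
  case 0 then show ?case by simp
next
  case (Suc J)
  show ?case
  proof (cases "x \<le> p' J")
    case True then show ?thesis using Suc by (meson less_Suc_eq)
  next
    case False then show ?thesis using Suc by (intro exI[of _ J]) auto
  qed
qed

definition aa :: "real \<Rightarrow> nat \<Rightarrow> real" where "aa D k = D^(k+1) * exp (-(2^k))"

lemma aa_nonneg: "D \<ge> 1 \<Longrightarrow> aa D k \<ge> 0" by (simp add: aa_def)

lemma aa_summable: assumes "D \<ge> 1" shows "summable (aa D)"
proof -
  obtain N where N: "2*D < 2^N" using real_arch_pow[of 2 "2*D"] by auto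
  show ?thesis
  proof (rule summable_ratio_test[of "1/2" N])
    fix k assume k: "N \<le> k"
    have "2*D < 2^k" using N power_increasing[OF k, of "2::real"] by linarith
    also have "(2::real)^k \<le> exp (2^k)" using exp_ge_add_one_self[of "2^k"] by linarith
    finally have e: "2*D \<le> exp (2^k)" by simp
    have m: "-((2::real)^Suc k) = -(2^k) + -(2^k)" by simp
    have e2: "exp (-((2::real)^(Suc k))) = exp (-(2^k)) * exp (-(2^k))"
      unfolding m by (rule exp_add)
    have "aa D (Suc k) = aa D k * (D * exp (-(2^k)))"
      unfolding aa_def e2 by (simp add: ac_simps)
    also have "D * exp (-(2^k)) \<le> 1/2"
    proof -
      have pos: "exp ((2::real)^k) > 0" by simp
      have "D * exp (-(2^k)) = D / exp (2^k)" by (simp add: exp_minus divide_inverse)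
      also have "\<dots> \<le> 1/2" using e pos by (simp add: divide_le_eq)
      finally show ?thesis .
    qed
    then have "aa D k * (D * exp (-(2^k))) \<le> aa D k * (1/2)"
      using aa_nonneg[OF assms, of k] by (rule mult_left_mono)
    finally show "norm (aa D (Suc k)) \<le> 1/2 * norm (aa D k)"
      using aa_nonneg[OF assms, of k] aa_nonneg[OF assms, of "Suc k"] by simp
  qed simp
qed

lemma exists_m: assumes "(n::nat) \<ge> 2" shows "\<exists>m. 2^(m+1) \<le> n \<and> n < 2^(m+2)"
proof -
  define k where "k = (LEAST k. n < (2::nat)^k)"
  have ex: "n < 2^n" by (rule less_exp)
  have k: "n < 2^k" unfolding k_def by (rule LeastI[of _ n]) (rule ex)
  have k2: "k \<ge> 2"
  proof (rule ccontr)
    assume "\<not> k \<ge> 2" then have "k \<le> 1" by simp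
    then have "(2::nat)^k \<le> 2^1" by (intro power_increasing) auto
    then show False using k assms by simp
  qed
  have "\<not> n < 2^(k-1)"
    unfolding k_def by (rule not_less_Least) (use k2 in \<open>simp add: k_def[symmetric]\<close>)
  then show ?thesis using k k2 by (intro exI[of _ "k-2"]) (auto simp: Suc_diff_Suc numeral_2_eq_2)
qed

locale vdbl = vset +
  fixes D :: real
  assumes D1: "D \<ge> 1"
    and dbl: "\<And>d. 0 < d \<Longrightarrow> d \<le> 1/2 \<Longrightarrow> v (1-d) \<le> D * v (1 - 2*d)"
begin

definition q :: "real \<Rightarrow> nat \<Rightarrow> real" where "q R j = min (pp j) R"

lemma q_ge: "1/2 \<le> R \<Longrightarrow> 1/2 \<le> q R j" using pp_ge by (simp add: q_def)
lemma q_lt: "q R j < 1" using pp_lt by (simp add: q_def min_less_iff_disj)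

lemma vq_pos: "1/2 \<le> R \<Longrightarrow> v (q R j) \<ge> 1"
  using ge1[of "q R j"] q_ge[of R j] q_lt[of R j] by simp

lemma pp_dbl: "v (pp (Suc j)) \<le> D * v (pp j)"
proof -
  have "v (1 - 1/2^(j+2)) \<le> D * v (1 - 2 * (1/2^(j+2)))"
    using one_le_power[of "2::real" "j+1"] by (intro dbl) (auto simp: field_simps)
  moreover have "1 - 2 * (1/2^(j+2)) = pp j" by (simp add: pp_def field_simps)
  ultimately show ?thesis by (simp add: pp_Suc)
qed

lemma pp_mono_Suc: "pp j \<le> pp (Suc j)"
  by (simp add: pp_def field_simps)

lemma vq_step: assumes R: "1/2 \<le> R" "R < 1" shows "v (q R (Suc j)) \<le> D * v (q R j)"
proof (cases "R \<le> pp j")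
  case True
  then have "q R (Suc j) = R" "q R j = R" using pp_mono_Suc[of j] by (auto simp: q_def)
  moreover have "v R \<ge> 1" using ge1 R by simp
  ultimately show ?thesis using D1 by (simp add: mult_le_cancel_right1 less_le_trans[of 0 1 "v R"])
next
  case False
  then have qj: "q R j = pp j" by (simp add: q_def)
  have "v (q R (Suc j)) \<le> v (pp (Suc j))"
    by (rule vle) (use q_ge[OF R(1), of "Suc j"] pp_lt[of "Suc j"] in \<open>auto simp: q_def\<close>)
  also have "\<dots> \<le> D * v (pp j)" by (rule pp_dbl)
  finally show ?thesis by (simp add: qj)
qed

lemma vq_pow: assumes R: "1/2 \<le> R" "R < 1" and "j \<le> m" shows "v (q R m) \<le> D^(m-j) * v (q R j)"
  using assms(3)
proof (induction m rule: dec_induct)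
  case base then show ?case by simp
next
  case (step k)
  have "v (q R (Suc k)) \<le> D * v (q R k)" by (rule vq_step[OF R])
  also have "\<dots> \<le> D * (D^(k-j) * v (q R j))" using step D1 by (intro mult_left_mono) auto
  also have "\<dots> = D^(Suc k - j) * v (q R j)" using step(1) by (simp add: Suc_diff_le)
  finally show ?case .
qed

end

lemma key_ineq:
  fixes a b D w :: real
  assumes "1 \<le> a" "a \<le> b" "b \<le> D*a" "0 \<le> w"
  shows "w / a^2 * (b - a) \<le> D * (w * (1/a - 1/b))"
proof -
  have a0: "a > 0" "b > 0" using assms by auto
  have "a*b \<le> D*(a*a)" using mult_left_mono[OF assms(3), of a] a0 by (simp add: ac_simps)
  then have "1/a^2 \<le> D/(a*b)" using a0 by (simp add: divide_simps power2_eq_square)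
  then have "w*(b-a)*(1/a^2) \<le> w*(b-a)*(D/(a*b))"
    using assms by (intro mult_left_mono) auto
  moreover have "w / a^2 * (b - a) = w*(b-a)*(1/a^2)" by simp
  moreover have "D * (w * (1/a - 1/b)) = w*(b-a)*(D/(a*b))" using a0 by (simp add: field_simps)
  ultimately show ?thesis by simp
qed

lemma telescope_dec: "m \<le> J \<Longrightarrow> (\<Sum>j\<in>{m..<J}. (u j - u (Suc j)::real)) = u m - u J"
  by (induction J rule: dec_induct) (simp_all add: sum.atLeastLessThan_Suc)

lemma w_bound:
  assumes "2^(m+1) \<le> n" "j < m"
  shows "pp (Suc j)^n \<le> exp (-(2^(m - Suc j)))"
proof -
  define x :: real where "x = 1/2^(j+2)"
  have p1: "(1::real) \<le> 2^j" by (rule one_le_power) simp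
  then have "1 \<le> 4*(2::real)^j" by linarith
  then have x0: "0 \<le> x" "x \<le> 1" unfolding x_def by (auto simp: field_simps)
  have "pp (Suc j) = 1 - x" by (simp add: pp_Suc x_def)
  then have "pp (Suc j)^n \<le> exp (-x)^n"
    using exp_ge_add_one_self[of "-x"] x0 by (intro power_mono) auto
  also have "exp (-x)^n = exp (-(real n * x))" by (simp add: exp_of_nat_mult[symmetric])
  also have "exp (-(real n * x)) \<le> exp (-(2^(m - Suc j)))"
  proof -
    have e: "m+1 = (m - Suc j) + (j+2)" using assms(2) by simp
    have pw: "(2::real)^(m+1) = 2^(m - Suc j) * 2^(j+2)" by (subst e, rule power_add)
    have "(2::real)^(m+1) \<le> real n" using assms(1)
      by (metis of_nat_le_iff of_nat_numeral of_nat_power)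
    then have "2^(m - Suc j) * 2^(j+2) \<le> real n" by (simp only: pw[symmetric])
    then have "2^(m - Suc j) \<le> real n * x" unfolding x_def by (simp add: field_simps)
    then show ?thesis by simp
  qed
  finally show ?thesis .
qed

context vdbl begin

lemma sum_bound:
  assumes R: "pp m \<le> R" "R < 1" and n: "2 \<le> n" "2^(m+1) \<le> n" "n < 2^(m+2)" and J: "m \<le> J"
  shows "(\<Sum>j<J. pp (Suc j)^n / (v (q R j))^2 * (v (q R (Suc j)) - v (q R j)))
           \<le> D^2 * (1 + suminf (aa D)) / v (1 - 1/real n)"
proof -
  have R1: "1/2 \<le> R" using pp_ge[of m] R by linarith
  define u where "u j = 1 / v (q R j)" for j
  define w where "w j = pp (Suc j)^n" for j
  have vq1: "v (q R j) \<ge> 1" for j by (rule vq_pos[OF R1])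
  have upos: "u j > 0" for j using vq1[of j] by (simp add: u_def)
  have qmono: "v (q R j) \<le> v (q R (Suc j))" for j
    by (rule vle) (use q_ge[OF R1, of j] q_lt[of R "Suc j"] pp_mono_Suc[of j] in \<open>auto simp: q_def\<close>)
  have udec: "u (Suc j) \<le> u j" for j
    unfolding u_def using qmono[of j] vq1[of j] by (simp add: divide_simps)
  have w0: "0 \<le> w j" for j using pp_ge[of "Suc j"] by (simp add: w_def)
  have w1: "w j \<le> 1" for j using pp_ge[of "Suc j"] pp_lt[of "Suc j"] unfolding w_def
    by (intro power_le_one) auto
  have t1: "pp (Suc j)^n / (v (q R j))^2 * (v (q R (Suc j)) - v (q R j)) \<le> D * (w j * (u j - u (Suc j)))" for j
    unfolding u_def w_def
    by (rule key_ineq[OF vq1 qmono vq_step[OF R1 R(2)]]) (use pp_ge[of "Suc j"] in simp)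
  have "(\<Sum>j<J. pp (Suc j)^n / (v (q R j))^2 * (v (q R (Suc j)) - v (q R j)))
        \<le> (\<Sum>j<J. D * (w j * (u j - u (Suc j))))"
    by (intro sum_mono t1)
  also have "\<dots> = D * (\<Sum>j<J. w j * (u j - u (Suc j)))" by (simp add: sum_distrib_left)
  also have "(\<Sum>j<J. w j * (u j - u (Suc j))) = (\<Sum>j<m. w j * (u j - u (Suc j))) + (\<Sum>j\<in>{m..<J}. w j * (u j - u (Suc j)))"
  proof -
    have U: "{..<J} = {..<m} \<union> {m..<J}" using J by auto
    show ?thesis by (subst U, rule sum.union_disjoint) auto
  qed
  also have "(\<Sum>j\<in>{m..<J}. w j * (u j - u (Suc j))) \<le> u m"
  proof -
    have "(\<Sum>j\<in>{m..<J}. w j * (u j - u (Suc j))) \<le> (\<Sum>j\<in>{m..<J}. (u j - u (Suc j)))"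
      using w0 w1 udec by (intro sum_mono mult_left_le_one_le) auto
    also have "\<dots> = u m - u J" by (rule telescope_dec[OF J])
    finally show ?thesis using upos[of J] by linarith
  qed
  also have "(\<Sum>j<m. w j * (u j - u (Suc j))) \<le> (\<Sum>j<m. aa D (m - Suc j) * u m)"
  proof (intro sum_mono)
    fix j assume j: "j \<in> {..<m}"
    have "w j * (u j - u (Suc j)) \<le> w j * u j" using w0[of j] upos[of "Suc j"]
      by (intro mult_left_mono) auto
    also have "u j \<le> D^(m-j) * u m"
    proof -
      have "v (q R m) \<le> D^(m-j) * v (q R j)" using j by (intro vq_pow[OF R1 R(2)]) auto
      then show ?thesis unfolding u_def using vq1[of j] vq1[of m]
        by (simp add: divide_simps mult.commute)
    qed
    then have "w j * u j \<le> w j * (D^(m-j) * u m)" using w0[of j] by (rule mult_left_mono)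
    also have "\<dots> \<le> exp (-(2^(m - Suc j))) * (D^(m-j) * u m)"
      using w_bound[OF n(2), of j] j upos[of m] D1 unfolding w_def
      by (intro mult_right_mono) auto
    also have "\<dots> = aa D (m - Suc j) * u m"
      using j by (simp add: aa_def Suc_diff_Suc)
    finally show "w j * (u j - u (Suc j)) \<le> aa D (m - Suc j) * u m" .
  qed
  also have "(\<Sum>j<m. aa D (m - Suc j) * u m) = (\<Sum>k<m. aa D k) * u m"
    by (simp add: sum_distrib_right[symmetric] sum.nat_diff_reindex)
  also have "(\<Sum>k<m. aa D k) \<le> suminf (aa D)"
    by (rule sum_le_suminf[OF aa_summable[OF D1]]) (auto intro: aa_nonneg[OF D1])
  finally have S1: "(\<Sum>j<J. pp (Suc j)^n / (v (q R j))^2 * (v (q R (Suc j)) - v (q R j)))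
        \<le> D * (suminf (aa D) * u m + u m)"
    using upos[of m] D1 by (auto intro: mult_left_mono mult_right_mono)
  have qm: "q R m = pp m" using R by (simp add: q_def)
  have nr: "real n < 2^(m+2)"
    using n(3) by (metis of_nat_less_iff of_nat_numeral of_nat_power)
  have n0: "real n > 0" using n(1) by simp
  have "1 - 1/real n \<le> pp (Suc m)"
    using nr n0 by (simp add: pp_Suc field_simps)
  moreover have "0 \<le> 1 - 1/real n" using n(1) by (simp add: field_simps)
  ultimately have "v (1 - 1/real n) \<le> v (pp (Suc m))" using pp_lt[of "Suc m"] by (intro vle) auto
  also have "\<dots> \<le> D * v (pp m)" by (rule pp_dbl)
  finally have vn: "v (1 - 1/real n) \<le> D * v (pp m)" .
  have vn1: "v (1 - 1/real n) \<ge> 1" using ge1[of "1 - 1/real n"] n0 n(1) by (simp add: field_simps)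
  have um: "u m \<le> D / v (1 - 1/real n)"
    unfolding u_def qm using vn vn1 vq1[of m] qm by (simp add: divide_simps mult.commute)
  have "D * (suminf (aa D) * u m + u m) = D * (1 + suminf (aa D)) * u m" by (simp add: algebra_simps)
  also have "\<dots> \<le> D * (1 + suminf (aa D)) * (D / v (1 - 1/real n))"
  proof (rule mult_left_mono[OF um])
    have "0 \<le> suminf (aa D)" by (rule suminf_nonneg[OF aa_summable[OF D1]]) (rule aa_nonneg[OF D1])
    then show "0 \<le> D * (1 + suminf (aa D))" using D1 by simp
  qed
  also have "\<dots> = D^2 * (1 + suminf (aa D)) / v (1 - 1/real n)" by (simp add: power2_eq_square)
  finally show ?thesis using S1 by linarith
qed

end

context vdbl begin

definition NN :: "nat \<Rightarrow> real \<Rightarrow> ennreal" where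
  "NN n R = (\<integral>\<^sup>+x. ennreal (indicator {1/2..R} x * (x ^ n / (v x)\<^sup>2)) \<partial>mu R)"

lemma ff_cont: assumes "1/2 \<le> R" "R < 1" shows "continuous_on {1/2..R} (\<lambda>x. x ^ n / (v x)\<^sup>2)"
proof -
  have c: "continuous_on {1/2..R} v" by (rule continuous_on_subset[OF vcont]) (use assms in auto)
  have "\<forall>x\<in>{1/2..R}. (v x)\<^sup>2 \<noteq> 0"
  proof
    fix x assume "x \<in> {1/2..R}"
    then have "v x \<ge> 1" using ge1 assms by auto
    then show "(v x)\<^sup>2 \<noteq> 0" by simp
  qed
  then show ?thesis by (intro continuous_intros c) auto
qed

lemma ff_meas: assumes "1/2 \<le> R" "R < 1"
  shows "(\<lambda>x. indicator {1/2..R} x * (x ^ n / (v x)\<^sup>2)) \<in> borel_measurable borel"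
  using borel_measurable_continuous_on_indicator[OF _ ff_cont[OF assms, of n]] by simp

lemma ff_nonneg: "0 \<le> indicator {1/2..R} x * (x ^ n / (v x)\<^sup>2)"
proof (cases "x \<in> {1/2..R}")
  case True
  then have "0 \<le> x" by auto
  then show ?thesis by simp
next
  case False then show ?thesis by simp
qed

lemma mu_F: "interval_measure (\<lambda>x. v (max (1/2) (min x R))) = mu R"
  unfolding mu_def F_def ..

lemma stieltjes_eq: assumes "1/2 \<le> R" "R < 1"
  shows "stieltjes_int (\<lambda>r. r ^ n / (v r)\<^sup>2) v (1/2) R = enn2real (NN n R)"
proof -
  have "stieltjes_int (\<lambda>r. r ^ n / (v r)\<^sup>2) v (1/2) R
      = integral\<^sup>L (mu R) (\<lambda>x. indicator {1/2..R} x * (x ^ n / (v x)\<^sup>2))"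
    unfolding stieltjes_int_def set_lebesgue_integral_def mu_F real_scaleR_def ..
  also have "\<dots> = enn2real (NN n R)" unfolding NN_def
  proof (rule integral_eq_nn_integral)
    show "(\<lambda>x. indicator {1/2..R} x * (x ^ n / (v x)\<^sup>2)) \<in> borel_measurable (mu R)"
      by (subst measurable_cong_sets[OF sets_mu refl]) (rule ff_meas[OF assms])
    show "AE x in mu R. 0 \<le> indicator {1/2..R} x * (x ^ n / (v x)\<^sup>2)"
      by (intro AE_I2 ff_nonneg)
  qed
  finally show ?thesis .
qed

lemma stieltjes_small: assumes "R < 1/2"
  shows "stieltjes_int (\<lambda>r. r ^ n / (v r)\<^sup>2) v (1/2) R = 0"
proof -
  have "{1/2..R} = {}" using assms by auto
  then show ?thesis unfolding stieltjes_int_def set_lebesgue_integral_def by simp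
qed

lemma NN_mono: assumes R: "1/2 \<le> R" "R \<le> R'" "R' < 1" shows "NN n R \<le> NN n R'"
proof -
  have R'': "1/2 \<le> R'" using R by linarith
  have "NN n R = (\<integral>\<^sup>+x. ennreal (indicator {1/2..R} x * (x ^ n / (v x)\<^sup>2)) \<partial>density (mu R') (indicator {1/2<..R}))"
    unfolding NN_def by (subst mu_restrict[OF R]) rule
  also have "\<dots> = (\<integral>\<^sup>+x. indicator {1/2<..R} x * ennreal (indicator {1/2..R} x * (x ^ n / (v x)\<^sup>2)) \<partial>mu R')"
  proof (rule nn_integral_density)
    show "(\<lambda>x. ennreal (indicator {1/2..R} x * (x ^ n / (v x)\<^sup>2))) \<in> borel_measurable (mu R')"
    proof (subst measurable_cong_sets[OF sets_mu refl])
      have [measurable]: "(\<lambda>x. indicator {1/2..R} x * (x ^ n / (v x)\<^sup>2)) \<in> borel_measurable borel"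
        by (rule ff_meas[OF R(1) order.strict_trans1[OF R(2,3)]])
      show "(\<lambda>x. ennreal (indicator {1/2..R} x * (x ^ n / (v x)\<^sup>2))) \<in> borel_measurable borel"
        by measurable
    qed
  qed simp
  also have "\<dots> \<le> NN n R'"
    unfolding NN_def
  proof (intro nn_integral_mono)
    fix x
    show "indicator {1/2<..R} x * ennreal (indicator {1/2..R} x * (x ^ n / (v x)\<^sup>2))
          \<le> ennreal (indicator {1/2..R'} x * (x ^ n / (v x)\<^sup>2))"
      using R by (cases "x \<in> {1/2<..R}") (auto simp: indicator_def)
  qed
  finally show ?thesis .
qed

lemma NN_bound:
  assumes R: "pp m \<le> R" "R < 1" and n: "2 \<le> n" "2^(m+1) \<le> n" "n < 2^(m+2)"
  shows "NN n R \<le> ennreal (D^2 * (1 + suminf (aa D)) / v (1 - 1/real n))"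
proof -
  have R1: "1/2 \<le> R" using pp_ge[of m] R by linarith
  obtain k where k: "1/(1-R) < 2^k" using real_arch_pow[of 2 "1/(1-R)"] by auto
  define J where "J = k + m"
  have J: "m \<le> J" by (simp add: J_def)
  have RJ: "R \<le> pp J"
  proof -
    have "(2::real)^k \<le> 2^(J+1)" by (intro power_increasing) (auto simp: J_def)
    then have "1/(1-R) < 2^(J+1)" using k by linarith
    then have "1/2^(J+1) < 1 - R" using R by (simp add: field_simps)
    then show ?thesis by (simp add: pp_def)
  qed
  define c where "c j = pp (Suc j)^n / (v (q R j))\<^sup>2" for j
  have c0: "0 \<le> c j" for j using pp_ge[of "Suc j"] by (simp add: c_def)
  let ?g = "\<lambda>x. ennreal (indicator {1/2..R} x * (x ^ n / (v x)\<^sup>2))"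
  let ?h = "\<lambda>x. ennreal ((1/2) ^ n / (v (1/2))\<^sup>2) * indicator {1/2} x
                + (\<Sum>j<J. ennreal (c j) * indicator {pp j<..pp (Suc j)} x)"
  have pw: "?g x \<le> ?h x" for x
  proof (cases "x \<in> {1/2..R}")
    case False then show ?thesis by simp
  next
    case xin: True
    show ?thesis
    proof (cases "x = 1/2")
      case True
      have e: "?g (1/2) = ennreal ((1/2) ^ n / (v (1/2))\<^sup>2) * indicator {1/2::real} (1/2::real)" using R1 by simp
      have "ennreal ((1/2) ^ n / (v (1/2))\<^sup>2) * indicator {1/2::real} (1/2::real) \<le> ?h (1/2)"
        by (rule add_increasing2) auto
      then show ?thesis unfolding True e .
    next
      case False
      then have "pp 0 < x" "x \<le> pp J" using xin RJ by (auto simp: pp_0)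
      then obtain j where j: "j < J" "pp j < x" "x \<le> pp (Suc j)" using find_interval by blast
      have x0: "0 \<le> x" "x < 1" using xin R by auto
      have vqx: "v (q R j) \<le> v x"
        by (rule vle) (use q_ge[OF R1, of j] j x0 in \<open>auto simp: q_def\<close>)
      have vq1: "1 \<le> v (q R j)" by (rule vq_pos[OF R1])
      have "x ^ n / (v x)\<^sup>2 \<le> c j" unfolding c_def
      proof (rule frac_le)
        show "x ^ n \<le> pp (Suc j) ^ n" using x0 j by (intro power_mono) auto
        show "(v (q R j))\<^sup>2 \<le> (v x)\<^sup>2" using vqx vq1 by (intro power_mono) auto
      qed (use vq1 pp_ge[of "Suc j"] in auto)
      then have "?g x \<le> ennreal (c j) * indicator {pp j<..pp (Suc j)} x"
        using xin j by (simp add: ennreal_leI)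
      also have "\<dots> \<le> (\<Sum>j<J. ennreal (c j) * indicator {pp j<..pp (Suc j)} x)"
        by (rule member_le_sum) (use j in auto)
      also have "\<dots> \<le> ?h x" by (rule add_increasing) auto
      finally show ?thesis .
    qed
  qed
  have "NN n R \<le> (\<integral>\<^sup>+x. ?h x \<partial>mu R)"
    unfolding NN_def by (intro nn_integral_mono pw)
  also have "\<dots> = (\<integral>\<^sup>+x. ennreal ((1/2) ^ n / (v (1/2))\<^sup>2) * indicator {1/2} x \<partial>mu R)
      + (\<integral>\<^sup>+x. (\<Sum>j<J. ennreal (c j) * indicator {pp j<..pp (Suc j)} x) \<partial>mu R)"
    by (rule nn_integral_add) measurable
  also have "(\<integral>\<^sup>+x. ennreal ((1/2) ^ n / (v (1/2))\<^sup>2) * indicator {1/2} x \<partial>mu R) = 0"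
    by (subst nn_integral_cmult_indicator) (auto simp: mu_sing[OF R1 R(2)])
  also have "(\<integral>\<^sup>+x. (\<Sum>j<J. ennreal (c j) * indicator {pp j<..pp (Suc j)} x) \<partial>mu R)
      = (\<Sum>j<J. (\<integral>\<^sup>+x. ennreal (c j) * indicator {pp j<..pp (Suc j)} x \<partial>mu R))"
    by (rule nn_integral_sum) measurable
  also have "\<dots> = (\<Sum>j<J. ennreal (c j * (v (q R (Suc j)) - v (q R j))))"
  proof (rule sum.cong[OF refl])
    fix j
    have Fq: "F R (pp i) = v (q R i)" for i
      using pp_ge[of i] R1 by (simp add: F_def q_def)
    have qm: "v (q R j) \<le> v (q R (Suc j))"
      by (rule vle) (use q_ge[OF R1, of j] q_lt[of R "Suc j"] pp_mono_Suc[of j] in \<open>auto simp: q_def\<close>)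
    have "(\<integral>\<^sup>+x. ennreal (c j) * indicator {pp j<..pp (Suc j)} x \<partial>mu R)
        = ennreal (c j) * emeasure (mu R) {pp j<..pp (Suc j)}"
      by (rule nn_integral_cmult_indicator) simp
    also have "\<dots> = ennreal (c j) * ennreal (v (q R (Suc j)) - v (q R j))"
      using mu_Ioc[OF R1 R(2) pp_mono_Suc[of j]] by (simp add: Fq)
    also have "\<dots> = ennreal (c j * (v (q R (Suc j)) - v (q R j)))"
      using c0[of j] qm by (simp add: ennreal_mult)
    finally show "(\<integral>\<^sup>+x. ennreal (c j) * indicator {pp j<..pp (Suc j)} x \<partial>mu R)
        = ennreal (c j * (v (q R (Suc j)) - v (q R j)))" .
  qed
  also have "\<dots> = ennreal (\<Sum>j<J. c j * (v (q R (Suc j)) - v (q R j)))"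
  proof (rule sum_ennreal)
    fix j
    have qm: "v (q R j) \<le> v (q R (Suc j))"
      by (rule vle) (use q_ge[OF R1, of j] q_lt[of R "Suc j"] pp_mono_Suc[of j] in \<open>auto simp: q_def\<close>)
    then show "0 \<le> c j * (v (q R (Suc j)) - v (q R j))" using c0[of j] by simp
  qed
  also have "\<dots> \<le> ennreal (D^2 * (1 + suminf (aa D)) / v (1 - 1/real n))"
    by (rule ennreal_leI) (use sum_bound[OF R n J] in \<open>simp add: c_def\<close>)
  finally show ?thesis by simp
qed

end

theorem mainTheorem10:
  fixes D :: real
  assumes "D \<ge> 1"
  shows "\<exists>C::real. \<exists>n0::nat. \<forall>v :: real \<Rightarrow> real.
    ((\<forall>r\<in>{0..<1}. v r \<ge> 1) \<and> mono_on {0..<1} v \<and> continuous_on {0..<1} v \<and> v 0 = 1 \<and>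
     filterlim v at_top (at_left 1) \<and>
     (\<forall>d\<in>{0<..1/2}. v (1 - d) \<le> D * v (1 - 2 * d)))
    \<longrightarrow> (\<forall>n::nat. n \<ge> 1 \<and> n \<ge> n0 \<longrightarrow>
          stieltjes_int_to1 (\<lambda>r. r ^ n / (v r)\<^sup>2) v (1/2)
            \<le> C / v (1 - 1 / real n))"
proof (intro exI[of _ "D^2 * (1 + suminf (aa D))"] exI[of _ "2::nat"] allI impI)
  fix v :: "real \<Rightarrow> real" and n :: nat
  assume H: "(\<forall>r\<in>{0..<1}. v r \<ge> 1) \<and> mono_on {0..<1} v \<and> continuous_on {0..<1} v \<and> v 0 = 1 \<and>
     filterlim v at_top (at_left 1) \<and>
     (\<forall>d\<in>{0<..1/2}. v (1 - d) \<le> D * v (1 - 2 * d))"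
  assume nn: "n \<ge> 1 \<and> n \<ge> 2"
  interpret vdbl v D
  proof
    show "\<And>r. 0 \<le> r \<Longrightarrow> r < 1 \<Longrightarrow> 1 \<le> v r" using H by auto
    show "mono_on {0..<1} v" using H by blast
    show "continuous_on {0..<1} v" using H by blast
    show "1 \<le> D" by (rule assms)
    show "\<And>d. 0 < d \<Longrightarrow> d \<le> 1/2 \<Longrightarrow> v (1-d) \<le> D * v (1-2*d)" using H by auto
  qed
  have n2: "2 \<le> n" using nn by simp
  obtain m where m: "2^(m+1) \<le> n" "n < 2^(m+2)" using exists_m[OF n2] by blast
  define B where "B = D^2 * (1 + suminf (aa D)) / v (1 - 1/real n)"
  define I where "I = (\<lambda>R. stieltjes_int (\<lambda>r. r ^ n / (v r)\<^sup>2) v (1/2) R)"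
  have n0: "real n > 0" using n2 by simp
  have vn: "v (1 - 1/real n) \<ge> 1" using ge1[of "1 - 1/real n"] n0 n2 by (simp add: field_simps)
  have S0: "0 \<le> suminf (aa D)" by (rule suminf_nonneg[OF aa_summable[OF D1]]) (rule aa_nonneg[OF D1])
  have B0: "0 \<le> B" unfolding B_def using S0 vn by simp
  have NNb: "NN n R \<le> ennreal B" if R: "1/2 \<le> R" "R < 1" for R
  proof -
    have "NN n R \<le> NN n (max R (pp m))" by (rule NN_mono) (use R pp_lt[of m] in auto)
    also have "\<dots> \<le> ennreal B" unfolding B_def
      by (rule NN_bound[OF _ _ n2 m]) (use R pp_lt[of m] in auto)
    finally show ?thesis .
  qed
  have Inn: "0 \<le> I R" for R
  proof (cases "R < 1/2")
    case True then show ?thesis by (simp add: I_def stieltjes_small)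
  next
    case False
    then show ?thesis unfolding I_def stieltjes_int_def set_lebesgue_integral_def
      by (intro integral_nonneg_AE AE_I2) (unfold real_scaleR_def, rule ff_nonneg)
  qed
  have Ib: "I R \<le> B" if "R < 1" for R
  proof (cases "R < 1/2")
    case True then show ?thesis using B0 by (simp add: I_def stieltjes_small)
  next
    case False
    then have "I R = enn2real (NN n R)" unfolding I_def using that by (intro stieltjes_eq) auto
    also have "\<dots> \<le> B" by (rule enn2real_leI[OF B0 NNb]) (use False that in auto)
    finally show ?thesis .
  qed
  have Imono: "I a \<le> I b" if "a \<le> b" "b < 1" for a b
  proof (cases "a < 1/2")
    case True then show ?thesis using Inn[of b] by (simp add: I_def stieltjes_small)
  next
    case False
    have "I a = enn2real (NN n a)" unfolding I_def using False that by (intro stieltjes_eq) auto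
    also have "\<dots> \<le> enn2real (NN n b)"
    proof (rule enn2real_mono)
      show "NN n a \<le> NN n b" by (rule NN_mono) (use False that in auto)
      have "NN n b \<le> ennreal B" by (rule NNb) (use False that in auto)
      then show "NN n b < top" using ennreal_less_top order.strict_trans1 by blast
    qed
    also have "\<dots> = I b" unfolding I_def using False that by (intro stieltjes_eq[symmetric]) auto
    finally show ?thesis .
  qed
  have lim: "(I \<longlongrightarrow> Sup (I ` ({..<1} \<inter> UNIV))) (at 1 within ({..<1} \<inter> UNIV))"
    by (rule Lim_left_bound[where K=B]) (auto intro: Imono Ib)
  then have lim': "(I \<longlongrightarrow> Sup (I ` {..<1})) (at_left 1)" by simp
  have "stieltjes_int_to1 (\<lambda>r. r ^ n / (v r)\<^sup>2) v (1/2) = Sup (I ` {..<1})"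
    unfolding stieltjes_int_to1_def I_def[symmetric]
    by (rule tendsto_Lim[OF trivial_limit_at_left_real lim'])
  also have "\<dots> \<le> B"
  proof (rule tendsto_upperbound[OF lim' _ trivial_limit_at_left_real])
    show "\<forall>\<^sub>F x in at_left 1. I x \<le> B"
      unfolding eventually_at_filter by (intro always_eventually allI impI Ib) simp
  qed
  finally show "stieltjes_int_to1 (\<lambda>r. r ^ n / (v r)\<^sup>2) v (1/2) \<le> D^2 * (1 + suminf (aa D)) / v (1 - 1 / real n)"
    unfolding B_def .
qed

end
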